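(* Let $\mathcal{W}\subseteq\{x\in\mathbb{R}^d:\|x\|_2\le1\}$ be closed convex with $0\in\mathcal{W}$, let $f_1,\dots,f_T$ be convex differentiable with $L$-Lipschitz gradients on $\mathcal{W}$, set $f_0\equiv0$, $x_0=z_0=0$, fix $\eta>0$, and for $t=1,\dots,T$ let $$x_t=\arg\min_{x\in\mathcal{W}}\Bigl\{\langle x,\nabla f_{t-1}(x_{t-1})\rangle+\tfrac{L}{2\eta}\|x-z_{t-1}\|_2^2\Bigr\},\qquad z_t=\arg\min_{x\in\mathcal{W}}\Bigl\{\langle x,\nabla f_t(x_t)\rangle+\tfrac{L}{2\eta}\|x-z_{t-1}\|_2^2\Bigr\}.$$ Let $\mathrm{EGV}_{T,2}=\sum_{t=0}^{T-1}\|\nabla f_{t+1}(x_t)-\nabla f_t(x_t)\|_2^2$. If $\eta=\frac12\min\{1/\sqrt2,\,L/\sqrt{\mathrm{EGV}_{T,2}}\}$, then $$\sum_{t=1}^T f_t(x_t)-\min_{x\in\mathcal{W}}\sum_{t=1}^T f_t(x)\le 2\max\{\sqrt2 L,\sqrt{\mathrm{EGV}_{T,2}}\}.$$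
   Context: The pair of updates is the online mirror prox (OMP) algorithm with Euclidean geometry; $x_t$ is played before $f_t$ is revealed. $\mathrm{EGV}_{T,2}$ is computed along the run of the algorithm with the given $\eta$. *)

theory Defs
  imports "HOL-Analysis.Analysis"
begin

definition is_argmin_on :: "('a \<Rightarrow> real) \<Rightarrow> 'a set \<Rightarrow> 'a \<Rightarrow> bool" where
  "is_argmin_on h W p \<longleftrightarrow> p \<in> W \<and> (\<forall>y\<in>W. h p \<le> h y)"

text \<open>Extended gradient variation EGV_{T,2} along the iterates x, with gradients g
  (g 0 is the gradient of f_0 = 0).\<close>
definition EGV :: "(nat \<Rightarrow> 'a \<Rightarrow> 'a::real_normed_vector) \<Rightarrow> (nat \<Rightarrow> 'a) \<Rightarrow> nat \<Rightarrow> real" where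
  "EGV g x T = (\<Sum>t=0..<T. (norm (g (Suc t) (x t) - g t (x t)))\<^sup>2)"

text \<open>eta = 1/2 min{1/sqrt 2, L/sqrt E}, with the convention L/sqrt 0 = +infinity.\<close>
definition omp_eta :: "real \<Rightarrow> real \<Rightarrow> real" where
  "omp_eta L E = (if E = 0 then (1/2) * (1 / sqrt 2)
                  else (1/2) * min (1 / sqrt 2) (L / sqrt E))"

end

theory Submission
  imports Defs
begin

lemma conv_grad:
  fixes F :: "'a::euclidean_space \<Rightarrow> real"
  assumes cv: "convex_on W F" and xW: "x \<in> W" and uW: "u \<in> W"
    and d: "(F has_derivative (\<lambda>h. G \<bullet> h)) (at x)"
  shows "G \<bullet> (u - x) \<le> F u - F x"
proof -
  define v where "v = u - x"
  define \<phi> where "\<phi> = (\<lambda>s::real. F (x + s *\<^sub>R v))"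
  have lin: "((\<lambda>s::real. x + s *\<^sub>R v) has_derivative (\<lambda>h. h *\<^sub>R v)) (at 0)"
    by (auto intro!: derivative_eq_intros)
  have "((F \<circ> (\<lambda>s::real. x + s *\<^sub>R v)) has_derivative ((\<lambda>h. G \<bullet> h) \<circ> (\<lambda>h. h *\<^sub>R v))) (at 0)"
    by (rule diff_chain_at[OF lin]) (simp add: d)
  hence "(\<phi> has_derivative (\<lambda>h. (G \<bullet> v) * h)) (at 0)"
    by (simp add: \<phi>_def o_def mult.commute)
  hence "(\<phi> has_field_derivative (G \<bullet> v)) (at 0)"
    by (simp add: has_field_derivative_def)
  hence lim: "((\<lambda>h. (\<phi> (0 + h) - \<phi> 0) / h) \<longlongrightarrow> G \<bullet> v) (at 0)"
    by (simp add: DERIV_def)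
  hence lim': "((\<lambda>h. (\<phi> (0 + h) - \<phi> 0) / h) \<longlongrightarrow> G \<bullet> v) (at_right 0)"
    by (rule tendsto_mono[rotated]) (simp add: at_le)
  have ev: "eventually (\<lambda>h. (\<phi> (0 + h) - \<phi> 0) / h \<le> F u - F x) (at_right 0)"
    using eventually_at_right_real[OF zero_less_one]
  proof eventually_elim
    case (elim h)
    hence h: "0 < h" "h < 1" by auto
    have "x + h *\<^sub>R v = (1 - h) *\<^sub>R x + h *\<^sub>R u"
      by (simp add: v_def algebra_simps)
    hence "\<phi> h \<le> (1 - h) * F x + h * F u"
      using convex_onD[OF cv, of h x u] h xW uW by (simp add: \<phi>_def)
    hence "\<phi> h - \<phi> 0 \<le> h * (F u - F x)" by (simp add: \<phi>_def algebra_simps)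
    thus ?case using h by (simp add: divide_simps mult.commute)
  qed
  have "G \<bullet> v \<le> F u - F x"
    by (rule tendsto_upperbound[OF lim' ev]) simp
  thus ?thesis by (simp add: v_def)
qed

lemma lin_nonneg:
  fixes A B :: real
  assumes B: "B \<ge> 0" and h: "\<And>s. 0 < s \<Longrightarrow> s \<le> 1 \<Longrightarrow> A + s * B \<ge> 0"
  shows "A \<ge> 0"
proof (rule ccontr)
  assume "\<not> A \<ge> 0"
  hence A: "A < 0" by simp
  show False
  proof (cases "B = 0")
    case True thus False using h[of 1] A by simp
  next
    case False
    hence Bp: "B > 0" using B by simp
    define s where "s = min 1 (- A / (2 * B))"
    have s0: "0 < s" using A Bp by (simp add: s_def field_simps)
    have s1: "s \<le> 1" by (simp add: s_def)
    have "s * B \<le> (- A / (2 * B)) * B" using Bp by (intro mult_right_mono) (auto simp: s_def)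
    also have "\<dots> = - A / 2" using Bp by (simp add: field_simps)
    finally have "A + s * B < 0" using A by simp
    thus False using h[OF s0 s1] by simp
  qed
qed

lemma argmin_VI:
  fixes m z p u :: "'a::euclidean_space"
  assumes am: "is_argmin_on (\<lambda>y. y \<bullet> m + K * (norm (y - z))\<^sup>2) W p"
    and cW: "convex W" and uW: "u \<in> W" and K: "K > 0"
  shows "(m + (2 * K) *\<^sub>R (p - z)) \<bullet> (u - p) \<ge> 0"
proof -
  have pW: "p \<in> W" and mn: "\<And>y. y \<in> W \<Longrightarrow> p \<bullet> m + K * (norm (p - z))\<^sup>2 \<le> y \<bullet> m + K * (norm (y - z))\<^sup>2"
    using am by (auto simp: is_argmin_on_def)
  define v where "v = u - p"
  show ?thesis unfolding v_def[symmetric]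
  proof (rule lin_nonneg[where B = "K * (norm v)\<^sup>2"])
    show "K * (norm v)\<^sup>2 \<ge> 0" using K by simp
    fix s :: real assume s: "0 < s" "s \<le> 1"
    have "p + s *\<^sub>R v = (1 - s) *\<^sub>R p + s *\<^sub>R u" by (simp add: v_def algebra_simps)
    also have "\<dots> \<in> W" using cW pW uW s by (intro convexD) auto
    finally have yW: "p + s *\<^sub>R v \<in> W" .
    have "0 \<le> (p + s *\<^sub>R v) \<bullet> m + K * (norm (p + s *\<^sub>R v - z))\<^sup>2 - (p \<bullet> m + K * (norm (p - z))\<^sup>2)"
      using mn[OF yW] by simp
    also have "\<dots> = s * ((m + (2 * K) *\<^sub>R (p - z)) \<bullet> v + s * (K * (norm v)\<^sup>2))"
      unfolding power2_norm_eq_inner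
      by (simp add: inner_add_left inner_add_right inner_diff_left inner_diff_right
            inner_commute algebra_simps)
    finally show "0 \<le> (m + (2 * K) *\<^sub>R (p - z)) \<bullet> v + s * (K * (norm v)\<^sup>2)"
      using s by (simp add: zero_le_mult_iff)
  qed
qed

lemma step_ineq:
  fixes q m x z z' u :: "'a::euclidean_space"
  assumes c: "c > 0"
    and vxz: "(m + c *\<^sub>R (x - z')) \<bullet> (z - x) \<ge> 0"
    and vzu: "(q + c *\<^sub>R (z - z')) \<bullet> (u - z) \<ge> 0"
    and vzx: "(q + c *\<^sub>R (z - z')) \<bullet> (x - z) \<ge> 0"
  shows "q \<bullet> (x - u) \<le> c/2 * ((norm (u - z'))\<^sup>2 - (norm (u - z))\<^sup>2) + (norm (q - m))\<^sup>2 / c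
           - c/2 * ((norm (x - z'))\<^sup>2 + (norm (x - z))\<^sup>2)"
proof -
  define P where "P = (q - m) \<bullet> (x - z)"
  define N where "N = norm (q - m)"
  define b where "b = norm (x - z)"
  have e1: "P - c * b\<^sup>2 = (m + c *\<^sub>R (x - z')) \<bullet> (z - x) + (q + c *\<^sub>R (z - z')) \<bullet> (x - z)"
    unfolding P_def b_def power2_norm_eq_inner
    by (simp add: inner_add_left inner_add_right inner_diff_left inner_diff_right inner_commute algebra_simps)
  hence lb: "c * b\<^sup>2 \<le> P" using vxz vzx by linarith
  have cs: "P \<le> N * b" unfolding P_def N_def b_def by (rule norm_cauchy_schwarz)
  have N0: "N \<ge> 0" "b \<ge> 0" by (auto simp: N_def b_def)
  have ub: "P * c \<le> N\<^sup>2"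
  proof (cases "b = 0")
    case True thus ?thesis using lb cs c by (simp add: mult_nonpos_nonneg)
  next
    case False
    hence bp: "b > 0" using N0 by simp
    have "c * b * b \<le> N * b" using lb cs by (simp add: power2_eq_square mult.assoc)
    hence cb: "c * b \<le> N" using bp by simp
    have "P * c \<le> N * b * c" using cs c by (simp add: mult_right_mono)
    also have "\<dots> = N * (c * b)" by simp
    also have "\<dots> \<le> N * N" using cb N0 by (simp add: mult_left_mono)
    finally show ?thesis by (simp add: power2_eq_square)
  qed
  hence ub': "P \<le> N\<^sup>2 / c" using c by (simp add: field_simps)
  have id: "q \<bullet> (x - u) = (c * ((z - z') \<bullet> (u - z)) + c * ((x - z') \<bullet> (z - x)))
      - (q + c *\<^sub>R (z - z')) \<bullet> (u - z) - (m + c *\<^sub>R (x - z')) \<bullet> (z - x) + P"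
    unfolding P_def
    by (simp add: inner_add_left inner_add_right inner_diff_left inner_diff_right inner_commute algebra_simps)
  have id2: "c * ((z - z') \<bullet> (u - z)) + c * ((x - z') \<bullet> (z - x)) =
      c/2 * ((norm (u - z'))\<^sup>2 - (norm (u - z))\<^sup>2) - c/2 * ((norm (x - z'))\<^sup>2 + (norm (x - z))\<^sup>2)"
    unfolding power2_norm_eq_inner
    by (simp add: inner_add_left inner_add_right inner_diff_left inner_diff_right inner_commute algebra_simps)
  show ?thesis using id id2 ub' vxz vzu unfolding N_def by linarith
qed

lemma sq_bound:
  fixes L a b D N c :: real
  assumes N: "N \<le> L * (a + b) + D" "0 \<le> N" and pos: "0 \<le> L" "0 \<le> a" "0 \<le> b" "0 \<le> D"
    and c: "c > 0" and cL: "8 * L\<^sup>2 \<le> c\<^sup>2"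
  shows "N\<^sup>2 / c \<le> c/2 * (a\<^sup>2 + b\<^sup>2) + 2/c * D\<^sup>2"
proof -
  have LL: "(L * (a + b))\<^sup>2 \<le> L\<^sup>2 * (2 * (a\<^sup>2 + b\<^sup>2))"
  proof -
    have "(a + b)\<^sup>2 \<le> 2 * (a\<^sup>2 + b\<^sup>2)" using sum_squares_ge_zero[of "a - b" 0]
      by (simp add: power2_eq_square algebra_simps)
    hence "L\<^sup>2 * (a + b)\<^sup>2 \<le> L\<^sup>2 * (2 * (a\<^sup>2 + b\<^sup>2))" by (rule mult_left_mono) simp
    thus ?thesis by (simp only: power_mult_distrib)
  qed
  have "N\<^sup>2 \<le> (L * (a + b) + D)\<^sup>2" using N by (intro power_mono) auto
  also have "\<dots> \<le> 2 * (L * (a + b))\<^sup>2 + 2 * D\<^sup>2"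
    using sum_squares_ge_zero[of "L*(a+b) - D" 0] by (simp add: power2_eq_square algebra_simps)
  also have "\<dots> \<le> 4 * L\<^sup>2 * (a\<^sup>2 + b\<^sup>2) + 2 * D\<^sup>2" using LL by (simp add: algebra_simps)
  also have "4 * L\<^sup>2 * (a\<^sup>2 + b\<^sup>2) \<le> c\<^sup>2 / 2 * (a\<^sup>2 + b\<^sup>2)"
    using cL by (intro mult_right_mono) auto
  hence "4 * L\<^sup>2 * (a\<^sup>2 + b\<^sup>2) + 2 * D\<^sup>2 \<le> c\<^sup>2 / 2 * (a\<^sup>2 + b\<^sup>2) + 2 * D\<^sup>2" by simp
  finally have "N\<^sup>2 \<le> c\<^sup>2 / 2 * (a\<^sup>2 + b\<^sup>2) + 2 * D\<^sup>2" by simp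
  thus ?thesis using c by (simp add: field_simps power2_eq_square)
qed

lemma eta_arith:
  fixes L E :: real
  assumes L: "L > 0" and E: "E \<ge> 0"
  shows "omp_eta L E > 0" "8 * L\<^sup>2 \<le> (L / omp_eta L E)\<^sup>2"
    "(L / omp_eta L E) / 2 + 2 / (L / omp_eta L E) * E \<le> 2 * max (sqrt 2 * L) (sqrt E)"
proof -
  have s2: "sqrt 2 > 0" "sqrt 2 * sqrt 2 = 2" by auto
  consider "E = 0" | "E > 0" "1 / sqrt 2 \<le> L / sqrt E" | "E > 0" "L / sqrt E < 1 / sqrt 2"
    using E by force
  hence "omp_eta L E > 0 \<and> 8 * L\<^sup>2 \<le> (L / omp_eta L E)\<^sup>2 \<and>
    (L / omp_eta L E) / 2 + 2 / (L / omp_eta L E) * E \<le> 2 * max (sqrt 2 * L) (sqrt E)"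
  proof cases
    case 1
    hence eta: "omp_eta L E = 1 / (2 * sqrt 2)" by (simp add: omp_eta_def)
    have c: "(L / omp_eta L E) = 2 * sqrt 2 * L" by (simp add: eta)
    have sq: "(2 * sqrt 2 * L)\<^sup>2 = 8 * L\<^sup>2" by (simp add: power_mult_distrib)
    have p: "sqrt 2 * L > 0" using L by simp
    show ?thesis unfolding c sq using 1 L eta s2 p by (simp add: max_def)
  next
    case 2
    hence eta: "omp_eta L E = 1 / (2 * sqrt 2)" by (simp add: omp_eta_def min_def)
    have c: "(L / omp_eta L E) = 2 * sqrt 2 * L" by (simp add: eta)
    have sq: "(2 * sqrt 2 * L)\<^sup>2 = 8 * L\<^sup>2" by (simp add: power_mult_distrib)
    have p: "sqrt 2 * L > 0" using L by simp
    have "sqrt E \<le> sqrt 2 * L" using 2 s2 p by (simp add: field_simps)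
    also have "sqrt 2 * L = sqrt (2 * L\<^sup>2)" using L by (simp add: real_sqrt_mult)
    finally have E2: "E \<le> 2 * L\<^sup>2" by simp
    have sq2: "(sqrt 2 * L) * (sqrt 2 * L) = 2 * L\<^sup>2" by (simp add: power2_eq_square)
    have "E / (sqrt 2 * L) \<le> sqrt 2 * L" by (subst pos_divide_le_eq[OF p]) (use E2 sq2 in simp)
    moreover have "2 / (2 * sqrt 2 * L) * E = E / (sqrt 2 * L)" by simp
    ultimately have e: "2 / (2 * sqrt 2 * L) * E \<le> sqrt 2 * L" by (simp only:)
    have "2 * sqrt 2 * L / 2 + 2 / (2 * sqrt 2 * L) * E \<le> 2 * (sqrt 2 * L)"
      using e by (simp only: nonzero_mult_div_cancel_left[of 2 "sqrt 2 * L", simplified mult.assoc[symmetric]])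
    also have "\<dots> \<le> 2 * max (sqrt 2 * L) (sqrt E)" by simp
    finally show ?thesis unfolding c sq using eta s2 by simp
  next
    case 3
    have sE: "sqrt E > 0" using 3 by simp
    have eta: "omp_eta L E = L / (2 * sqrt E)" using 3 by (simp add: omp_eta_def min_def)
    have c: "L / omp_eta L E = 2 * sqrt E" using L sE by (simp add: eta)
    have "sqrt 2 * L < sqrt E" using 3 s2 sE by (simp add: field_simps)
    hence "(sqrt 2 * L)\<^sup>2 \<le> (sqrt E)\<^sup>2" using L by (intro power_mono) auto
    hence "2 * L\<^sup>2 \<le> E" using E by (simp add: power_mult_distrib)
    hence "8 * L\<^sup>2 \<le> (2 * sqrt E)\<^sup>2" using E by (simp add: power_mult_distrib)
    moreover have "2 / (2 * sqrt E) * E = sqrt E" using sE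
      by (simp add: field_simps)
    ultimately show ?thesis using c L eta sE by (simp add: max_def)
  qed
  thus "omp_eta L E > 0" "8 * L\<^sup>2 \<le> (L / omp_eta L E)\<^sup>2"
    "(L / omp_eta L E) / 2 + 2 / (L / omp_eta L E) * E \<le> 2 * max (sqrt 2 * L) (sqrt E)" by auto
qed

lemma ring_id: "(a::real) * (p - q) + b * s + (a * (q - r) + b * d) = a * (p - r) + b * (s + d)"
  by (simp add: algebra_simps)

theorem mainTheorem4:
  fixes W :: "'a::euclidean_space set"
    and f :: "nat \<Rightarrow> 'a \<Rightarrow> real"
    and g :: "nat \<Rightarrow> 'a \<Rightarrow> 'a"
    and x z :: "nat \<Rightarrow> 'a"
    and L \<eta> :: real and T :: nat
  assumes W_closed: "closed W" and W_convex: "convex W"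
    and W_ball: "W \<subseteq> cball 0 1" and W_zero: "0 \<in> W"
    and L_pos: "L > 0"
    and f_convex: "\<And>t. t \<in> {1..T} \<Longrightarrow> convex_on W (f t)"
    and f_grad: "\<And>t y. t \<in> {1..T} \<Longrightarrow> y \<in> W \<Longrightarrow>
                   (f t has_derivative (\<lambda>h. g t y \<bullet> h)) (at y)"
    and g_lip: "\<And>t y y'. t \<in> {1..T} \<Longrightarrow> y \<in> W \<Longrightarrow> y' \<in> W \<Longrightarrow>
                   norm (g t y - g t y') \<le> L * norm (y - y')"
    and f0: "f 0 = (\<lambda>_. 0)" and g0: "g 0 = (\<lambda>_. 0)"
    and x0: "x 0 = 0" and z0: "z 0 = 0"
    and eta_pos: "\<eta> > 0"
    and x_step: "\<And>t. t \<in> {1..T} \<Longrightarrow>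
       is_argmin_on (\<lambda>y. y \<bullet> g (t - 1) (x (t - 1)) + L / (2 * \<eta>) * (norm (y - z (t - 1)))\<^sup>2) W (x t)"
    and z_step: "\<And>t. t \<in> {1..T} \<Longrightarrow>
       is_argmin_on (\<lambda>y. y \<bullet> g t (x t) + L / (2 * \<eta>) * (norm (y - z (t - 1)))\<^sup>2) W (z t)"
    and eta_choice: "\<eta> = omp_eta L (EGV g x T)"
  shows "(\<Sum>t=1..T. f t (x t)) - (INF u\<in>W. \<Sum>t=1..T. f t u)
           \<le> 2 * max (sqrt 2 * L) (sqrt (EGV g x T))"
proof -
  define E where "E = EGV g x T"
  define c where "c = L / \<eta>"
  have E0: "E \<ge> 0" by (simp add: E_def EGV_def sum_nonneg)
  have cpos: "c > 0" using L_pos eta_pos by (simp add: c_def)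
  have c8: "8 * L\<^sup>2 \<le> c\<^sup>2" using eta_arith(2)[OF L_pos E0] eta_choice by (simp add: c_def E_def)
  have cB: "c / 2 + 2 / c * E \<le> 2 * max (sqrt 2 * L) (sqrt E)"
    using eta_arith(3)[OF L_pos E0] eta_choice by (simp add: c_def E_def)
  have K: "L / (2 * \<eta>) > 0" using L_pos eta_pos by simp
  have K2: "2 * (L / (2 * \<eta>)) = c" by (simp add: c_def)
  have xzW: "x t \<in> W \<and> z t \<in> W" if "t \<le> T" for t
  proof (cases "t = 0")
    case True thus ?thesis using x0 z0 W_zero by simp
  next
    case False
    hence t: "t \<in> {1..T}" using that by simp
    show ?thesis using x_step[OF t] z_step[OF t] by (simp add: is_argmin_on_def)
  qed
  have VIx: "(g (t - 1) (x (t - 1)) + c *\<^sub>R (x t - z (t - 1))) \<bullet> (v - x t) \<ge> 0"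
    if t: "t \<in> {1..T}" and v: "v \<in> W" for t v
    using argmin_VI[OF x_step[OF t] W_convex v K] unfolding K2 .
  have VIz: "(g t (x t) + c *\<^sub>R (z t - z (t - 1))) \<bullet> (v - z t) \<ge> 0"
    if t: "t \<in> {1..T}" and v: "v \<in> W" for t v
    using argmin_VI[OF z_step[OF t] W_convex v K] unfolding K2 .
  define D where "D = (\<lambda>s. norm (g (Suc s) (x s) - g s (x s)))"
  have ED: "E = (\<Sum>s=0..<T. (D s)\<^sup>2)" by (simp add: E_def EGV_def D_def)
  have main: "(\<Sum>t=1..T. f t (x t)) - (\<Sum>t=1..T. f t u) \<le> c / 2 + 2 / c * E" if uW: "u \<in> W" for u
  proof -
    define \<Phi> where "\<Phi> = (\<lambda>s. (norm (u - z s))\<^sup>2 + (norm (x s - z s))\<^sup>2)"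
    have step: "f t (x t) - f t u \<le> c / 2 * (\<Phi> (t - 1) - \<Phi> t) + 2 / c * (D (t - 1))\<^sup>2"
      if t: "t \<in> {1..T}" for t
    proof -
      have tT: "t \<le> T" "t - 1 \<le> T" using t by auto
      have W1: "x t \<in> W" "z t \<in> W" "x (t-1) \<in> W" "z (t-1) \<in> W" using xzW[OF tT(1)] xzW[OF tT(2)] by auto
      have cg: "g t (x t) \<bullet> (u - x t) \<le> f t u - f t (x t)"
        by (rule conv_grad[OF f_convex[OF t] W1(1) uW f_grad[OF t W1(1)]])
      have cg': "f t (x t) - f t u \<le> g t (x t) \<bullet> (x t - u)"
        using cg by (simp add: inner_diff_right)
      have si: "g t (x t) \<bullet> (x t - u) \<le> c/2 * ((norm (u - z (t-1)))\<^sup>2 - (norm (u - z t))\<^sup>2)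
          + (norm (g t (x t) - g (t-1) (x (t-1))))\<^sup>2 / c
          - c/2 * ((norm (x t - z (t-1)))\<^sup>2 + (norm (x t - z t))\<^sup>2)"
        by (rule step_ineq[OF cpos VIx[OF t W1(2)] VIz[OF t uW] VIz[OF t W1(1)]])
      have St: "Suc (t - 1) = t" using t by simp
      have "norm (g t (x t) - g (t-1) (x (t-1)))
          \<le> norm (g t (x t) - g t (x (t-1))) + norm (g t (x (t-1)) - g (t-1) (x (t-1)))"
        by (rule order_trans[OF _ norm_triangle_ineq]) simp
      also have "norm (g t (x t) - g t (x (t-1))) \<le> L * norm (x t - x (t-1))"
        by (rule g_lip[OF t W1(1) W1(3)])
      also have "norm (x t - x (t-1)) \<le> norm (x t - z (t-1)) + norm (x (t-1) - z (t-1))"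
        using norm_triangle_ineq[of "x t - z (t-1)" "z (t-1) - x (t-1)"] by (simp add: norm_minus_commute)
      hence "L * norm (x t - x (t-1)) \<le> L * (norm (x t - z (t-1)) + norm (x (t-1) - z (t-1)))"
        using L_pos by (simp add: mult_left_mono)
      finally have N: "norm (g t (x t) - g (t-1) (x (t-1)))
          \<le> L * (norm (x t - z (t-1)) + norm (x (t-1) - z (t-1))) + D (t - 1)"
        unfolding D_def St by simp
      have sb: "(norm (g t (x t) - g (t-1) (x (t-1))))\<^sup>2 / c \<le>
          c/2 * ((norm (x t - z (t-1)))\<^sup>2 + (norm (x (t-1) - z (t-1)))\<^sup>2) + 2/c * (D (t-1))\<^sup>2"
        by (rule sq_bound[OF N]) (use L_pos cpos c8 in \<open>auto simp: D_def\<close>)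
      show ?thesis using cg' si sb unfolding \<Phi>_def by (simp add: algebra_simps)
    qed
    have ind: "n \<le> T \<Longrightarrow> (\<Sum>t=1..n. f t (x t) - f t u) \<le> c / 2 * (\<Phi> 0 - \<Phi> n) + 2 / c * (\<Sum>s=0..<n. (D s)\<^sup>2)" for n
    proof (induction n)
      case 0 thus ?case by simp
    next
      case (Suc n)
      have t: "Suc n \<in> {1..T}" using Suc.prems by simp
      have "(\<Sum>t=1..Suc n. f t (x t) - f t u) = (\<Sum>t=1..n. f t (x t) - f t u) + (f (Suc n) (x (Suc n)) - f (Suc n) u)"
        by simp
      also have "\<dots> \<le> (c / 2 * (\<Phi> 0 - \<Phi> n) + 2 / c * (\<Sum>s=0..<n. (D s)\<^sup>2))
          + (c / 2 * (\<Phi> n - \<Phi> (Suc n)) + 2 / c * (D n)\<^sup>2)"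
        using Suc.IH Suc.prems step[OF t] by (intro add_mono) auto
      also have "\<dots> = c / 2 * (\<Phi> 0 - \<Phi> (Suc n)) + 2 / c * (\<Sum>s=0..<Suc n. (D s)\<^sup>2)"
        using ring_id[of "c/2" "\<Phi> 0" "\<Phi> n" "2/c" "\<Sum>s=0..<n. (D s)\<^sup>2" "\<Phi> (Suc n)" "(D n)\<^sup>2"] by simp
      finally show ?case .
    qed
    have A: "(\<Sum>t=1..T. f t (x t) - f t u) \<le> c / 2 * (\<Phi> 0 - \<Phi> T) + 2 / c * E"
      using ind[of T] ED by simp
    have P0: "\<Phi> 0 \<le> 1"
    proof -
      have "norm u \<le> 1" using uW W_ball by auto
      hence "(norm u)\<^sup>2 \<le> 1" by (simp add: power_le_one)
      thus ?thesis by (simp add: \<Phi>_def x0 z0)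
    qed
    have PT: "\<Phi> T \<ge> 0" unfolding \<Phi>_def by simp
    have "c / 2 * (\<Phi> 0 - \<Phi> T) \<le> c / 2 * 1" using cpos P0 PT by (intro mult_left_mono) auto
    hence "(\<Sum>t=1..T. f t (x t) - f t u) \<le> c / 2 + 2 / c * E" using A by simp
    thus ?thesis by (simp add: sum_subtractf)
  qed
  have "(\<Sum>t=1..T. f t (x t)) - 2 * max (sqrt 2 * L) (sqrt E) \<le> (INF u\<in>W. \<Sum>t=1..T. f t u)"
  proof (rule cINF_greatest)
    show "W \<noteq> {}" using W_zero by auto
    fix u assume "u \<in> W"
    thus "(\<Sum>t=1..T. f t (x t)) - 2 * max (sqrt 2 * L) (sqrt E) \<le> (\<Sum>t=1..T. f t u)"
      using main cB by force
  qed
  thus ?thesis unfolding E_def by simp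
qed

end
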